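(* Let $M\in\Lambda_{\mathrm{NF}}$ with $M:\phi$ and blueprint $\beta$, and let $\alpha$ be a blueprint with $\alpha\Uparrow\beta$. Then there exists a term $M'\in\Lambda_{\mathrm{NF}}$ of the same kind as $M$, with blueprint $\alpha$, such that $|\mathrm{dom}(M')|\le|\mathrm{dom}(M)|$.
   Context: Formulas are built from atoms with $\to$. Let $\mathcal X$ be a countably infinite set of variables with an injective map $\mathcal O:\mathcal X\to\mathbb N$; $x<y$ iff $\mathcal O(x)<\mathcal O(y)$. Terms are pure $\lambda$-terms over $\mathcal X$, not identified up to $\alpha$-conversion; no two $\lambda$'s bind the same variable and no variable is both free and bound. $\mathrm{Free}(M)$ is the strictly increasing sequence of free variables of $M$. HRM terms: variables; $\lambda x.M$ with $M$ HRM and $x$ the greatest free variable of $M$; $(MN)$ with $M,N$ HRM and every free variable of $M$ $\le$ some free variable of $N$. Fix $\Omega$ from variables to formulas with each $\Omega^{-1}(\phi)$ infinite. Typing: $x:\Omega(x)$; $\lambda x.M:\chi\to\psi$ if $x:\chi$, $M:\psi$, $\lambda x.M$ HRM; $(MN):\psi$ if $M:\chi\to\psi$, $N:\chi$, $(MN)$ HRM. $\Lambda_{\mathrm{NF}}$ is the set of typed $\beta$-normal terms. Two terms of $\Lambda_{\mathrm{NF}}$ are of the same kind if both are variables, or both applications, or both abstractions, and they have the same type. Addresses are finite sequences of positive integers with prefix order $\le$ ($<$ strict), concatenation $\cdot$, empty address $\varepsilon$. Terms are identified with trees: $x$ is $\varepsilon\mapsto x$; $\lambda x.M$ maps $\varepsilon$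 to $\lambda x$ with subtree $M$ at $(1)$; $(M_1M_2)$ maps $\varepsilon$ to $@$ with subtrees at $(1),(2)$; $M|_a$ is the subterm at $a$, $\mathrm{dom}(M)$ the set of its addresses. For a partial tree $\pi$ (function on a set of addresses), $\pi|_a$ is $c\mapsto\pi(a\cdot c)$, and $\pi[a\leftarrow\pi']$ is the partial tree $\pi''$ with $\pi''|_a=\pi'$ and $\pi''(b)=\pi(b)$ for all $b\in\mathrm{dom}(\pi)$ with $a\not\le b$. Let $\mathfrak S$ consist of all formulas (arity 0) and symbols $@_\phi$ (arity 2). A blueprint is a finite partial tree with values in $\mathfrak S$ such that if $\alpha(a)=@_\phi$ then $\alpha|_{a\cdot(1)},\alpha|_{a\cdot(2)}$ have non-empty domains. The stable part of $M\in\Lambda_{\mathrm{NF}}$ is the set of $a\in\mathrm{dom}(M)$ with $\mathrm{Free}(M|_a)\subseteq\mathrm{Free}(M)$ and $M|_a$ a variable or an application; the blueprint of $M$ maps each $a$ in the stable part to $\psi$ if $M|_a$ is a variable of type $\psi$ and to $@_\psi$ if $M|_a$ is an application of type $\psi$. The relation $\Uparrow$ (vertical compression) is the least reflexive and transitive relation on blueprints such that whenever $a,b\in\mathrm{dom}(\beta)$, $a<b$ and $\beta(a)=\beta(b)$, we have $\beta[a\leftarrow\beta|_b]\Uparrow\beta$. *)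

theory Defs
  imports Main "HOL-Library.Sublist"
begin

datatype 'a form = Atom 'a | Imp "'a form" "'a form"

text \<open>Pure lambda terms over variables of type 'v (no alpha-identification).\<close>
datatype 'v trm = Var 'v | Lam 'v "'v trm" | App "'v trm" "'v trm"

fun fv :: "'v trm \<Rightarrow> 'v set" where
  "fv (Var x) = {x}"
| "fv (Lam x M) = fv M - {x}"
| "fv (App M N) = fv M \<union> fv N"

fun binders :: "'v trm \<Rightarrow> 'v list" where
  "binders (Var x) = []"
| "binders (Lam x M) = x # binders M"
| "binders (App M N) = binders M @ binders N"

definition wf_trm :: "'v trm \<Rightarrow> bool" where
  "wf_trm M \<longleftrightarrow> distinct (binders M) \<and> set (binders M) \<inter> fv M = {}"

text \<open>The order on variables is induced by the injective map ord (the paper's O):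
  x < y iff ord x < ord y.\<close>
fun hrm :: "('v \<Rightarrow> nat) \<Rightarrow> 'v trm \<Rightarrow> bool" where
  "hrm ord (Var x) = True"
| "hrm ord (Lam x M) \<longleftrightarrow> hrm ord M \<and> x \<in> fv M \<and> (\<forall>y\<in>fv M. ord y \<le> ord x)"
| "hrm ord (App M N) \<longleftrightarrow> hrm ord M \<and> hrm ord N \<and>
      (\<forall>y\<in>fv M. \<exists>z\<in>fv N. ord y \<le> ord z)"

inductive has_type :: "('v \<Rightarrow> nat) \<Rightarrow> ('v \<Rightarrow> 'a form) \<Rightarrow> 'v trm \<Rightarrow> 'a form \<Rightarrow> bool" where
  ty_var: "has_type ord \<Omega> (Var x) (\<Omega> x)"
| ty_lam: "has_type ord \<Omega> M \<psi> \<Longrightarrow> hrm ord (Lam x M) \<Longrightarrow>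
           has_type ord \<Omega> (Lam x M) (Imp (\<Omega> x) \<psi>)"
| ty_app: "has_type ord \<Omega> M (Imp \<chi> \<psi>) \<Longrightarrow> has_type ord \<Omega> N \<chi> \<Longrightarrow> hrm ord (App M N) \<Longrightarrow>
           has_type ord \<Omega> (App M N) \<psi>"

definition type_of :: "('v \<Rightarrow> nat) \<Rightarrow> ('v \<Rightarrow> 'a form) \<Rightarrow> 'v trm \<Rightarrow> 'a form" where
  "type_of ord \<Omega> M = (THE \<psi>. has_type ord \<Omega> M \<psi>)"

fun beta_normal :: "'v trm \<Rightarrow> bool" where
  "beta_normal (Var x) = True"
| "beta_normal (Lam x M) = beta_normal M"
| "beta_normal (App M N) \<longleftrightarrow> (\<forall>x P. M \<noteq> Lam x P) \<and> beta_normal M \<and> beta_normal N"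

definition LNF :: "('v \<Rightarrow> nat) \<Rightarrow> ('v \<Rightarrow> 'a form) \<Rightarrow> 'v trm set" where
  "LNF ord \<Omega> = {M. wf_trm M \<and> (\<exists>\<psi>. has_type ord \<Omega> M \<psi>) \<and> beta_normal M}"

fun kind :: "'v trm \<Rightarrow> nat" where
  "kind (Var x) = 0"
| "kind (App M N) = 1"
| "kind (Lam x M) = 2"

definition same_kind :: "('v \<Rightarrow> nat) \<Rightarrow> ('v \<Rightarrow> 'a form) \<Rightarrow> 'v trm \<Rightarrow> 'v trm \<Rightarrow> bool" where
  "same_kind ord \<Omega> M N \<longleftrightarrow> kind M = kind N \<and> type_of ord \<Omega> M = type_of ord \<Omega> N"

type_synonym addr = "nat list"

fun subt :: "'v trm \<Rightarrow> addr \<Rightarrow> 'v trm option" where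
  "subt M [] = Some M"
| "subt (Lam x M) (i # a) = (if i = 1 then subt M a else None)"
| "subt (App M N) (i # a) = (if i = 1 then subt M a else if i = 2 then subt N a else None)"
| "subt (Var x) (i # a) = None"

definition tdom :: "'v trm \<Rightarrow> addr set" where
  "tdom M = {a. subt M a \<noteq> None}"

text \<open>Symbols: formulas (arity 0) and @_phi (arity 2).\<close>
datatype 'a sym = FormS "'a form" | AppS "'a form"

type_synonym 'b ptree = "addr \<Rightarrow> 'b option"

definition ptsub :: "'b ptree \<Rightarrow> addr \<Rightarrow> 'b ptree" where
  "ptsub \<pi> a = (\<lambda>c. \<pi> (a @ c))"

definition ptrepl :: "'b ptree \<Rightarrow> addr \<Rightarrow> 'b ptree \<Rightarrow> 'b ptree" where
  "ptrepl \<pi> a \<pi>' = (\<lambda>b. if prefix a b then \<pi>' (drop (length a) b) else \<pi> b)"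

definition blueprint :: "'a sym ptree \<Rightarrow> bool" where
  "blueprint \<alpha> \<longleftrightarrow> finite (dom \<alpha>) \<and> (\<forall>a\<in>dom \<alpha>. \<forall>i\<in>set a. 0 < i) \<and>
     (\<forall>a \<phi>. \<alpha> a = Some (AppS \<phi>) \<longrightarrow>
        dom (ptsub \<alpha> (a @ [1])) \<noteq> {} \<and> dom (ptsub \<alpha> (a @ [2])) \<noteq> {})"

definition stable_part :: "'v trm \<Rightarrow> addr set" where
  "stable_part M = {a \<in> tdom M. \<exists>N. subt M a = Some N \<and> fv N \<subseteq> fv M \<and> kind N \<noteq> 2}"

definition blueprint_of :: "('v \<Rightarrow> nat) \<Rightarrow> ('v \<Rightarrow> 'a form) \<Rightarrow> 'v trm \<Rightarrow> 'a sym ptree" where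
  "blueprint_of ord \<Omega> M = (\<lambda>a. if a \<in> stable_part M then
      (case subt M a of
         Some (Var x) \<Rightarrow> Some (FormS (type_of ord \<Omega> (Var x)))
       | Some (App P Q) \<Rightarrow> Some (AppS (type_of ord \<Omega> (App P Q)))
       | _ \<Rightarrow> None)
     else None)"

inductive vcomp :: "'a sym ptree \<Rightarrow> 'a sym ptree \<Rightarrow> bool" where
  vc_refl: "blueprint \<beta> \<Longrightarrow> vcomp \<beta> \<beta>"
| vc_step: "blueprint \<beta> \<Longrightarrow> a \<in> dom \<beta> \<Longrightarrow> b \<in> dom \<beta> \<Longrightarrow> strict_prefix a b \<Longrightarrow>
            \<beta> a = \<beta> b \<Longrightarrow> vcomp (ptrepl \<beta> a (ptsub \<beta> b)) \<beta>"
| vc_trans: "vcomp \<alpha> \<beta> \<Longrightarrow> vcomp \<beta> \<gamma> \<Longrightarrow> vcomp \<alpha> \<gamma>"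

end

theory Submission
  imports Defs "HOL-Library.Sublist"
begin


datatype 'a nt = NF "'a form" | NB nat | NL "'a form" "'a nt" | NA "'a nt" "'a nt"

fun lo :: "'a nt \<Rightarrow> nat set" where
  "lo (NF t) = {}"
| "lo (NB i) = {i}"
| "lo (NL s X) = (\<lambda>i. i - 1) ` (lo X - {0})"
| "lo (NA X Y) = lo X \<union> lo Y"

fun nfc :: "'a nt \<Rightarrow> nat" where
  "nfc (NF t) = 1"
| "nfc (NB i) = 0"
| "nfc (NL s X) = nfc X"
| "nfc (NA X Y) = nfc X + nfc Y"

definition hv :: "'a nt \<Rightarrow> bool" where
  "hv X \<longleftrightarrow> 0 < nfc X \<or> lo X \<noteq> {}"

fun nty :: "'a form list \<Rightarrow> 'a nt \<Rightarrow> 'a form option" where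
  "nty G (NF t) = Some t"
| "nty G (NB i) = (if i < length G then Some (G ! i) else None)"
| "nty G (NL s X) = map_option (Imp s) (nty (s # G) X)"
| "nty G (NA X Y) = (case nty G X of Some (Imp a b) \<Rightarrow> (if nty G Y = Some a then Some b else None) | _ \<Rightarrow> None)"

fun nnorm :: "'a nt \<Rightarrow> bool" where
  "nnorm (NF t) = True"
| "nnorm (NB i) = True"
| "nnorm (NL s X) = nnorm X"
| "nnorm (NA X Y) = ((\<forall>s Z. X \<noteq> NL s Z) \<and> nnorm X \<and> nnorm Y)"

fun nsh :: "'a nt \<Rightarrow> bool" where
  "nsh (NF t) = True"
| "nsh (NB i) = True"
| "nsh (NL s X) = (0 \<in> lo X \<and> nsh X)"
| "nsh (NA X Y) = (nsh X \<and> nsh Y \<and> (\<forall>i\<in>lo X. \<exists>j\<in>lo Y. j \<le> i) \<and> (hv X \<longrightarrow> hv Y))"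

fun nsub :: "'a nt \<Rightarrow> addr \<Rightarrow> 'a nt option" where
  "nsub X [] = Some X"
| "nsub (NL s X) (i # a) = (if i = 1 then nsub X a else None)"
| "nsub (NA X Y) (i # a) = (if i = 1 then nsub X a else if i = 2 then nsub Y a else None)"
| "nsub (NF t) (i # a) = None"
| "nsub (NB j) (i # a) = None"

fun nrepl :: "'a nt \<Rightarrow> addr \<Rightarrow> 'a nt \<Rightarrow> 'a nt" where
  "nrepl X [] Z = Z"
| "nrepl (NL s X) (i # a) Z = (if i = 1 then NL s (nrepl X a Z) else NL s X)"
| "nrepl (NA X Y) (i # a) Z = (if i = 1 then NA (nrepl X a Z) Y else if i = 2 then NA X (nrepl Y a Z) else NA X Y)"
| "nrepl (NF t) (i # a) Z = NF t"
| "nrepl (NB j) (i # a) Z = NB j"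

fun nsize :: "'a nt \<Rightarrow> nat" where
  "nsize (NF t) = 1"
| "nsize (NB i) = 1"
| "nsize (NL s X) = Suc (nsize X)"
| "nsize (NA X Y) = Suc (nsize X + nsize Y)"

definition ndom :: "'a nt \<Rightarrow> addr set" where
  "ndom X = {a. nsub X a \<noteq> None}"

fun nk :: "'a nt \<Rightarrow> nat" where
  "nk (NF t) = 0" | "nk (NB i) = 0" | "nk (NA X Y) = 1" | "nk (NL s X) = 2"

fun lab :: "'a nt option \<Rightarrow> 'a sym option" where
  "lab (Some (NF t)) = Some (FormS t)"
| "lab (Some (NA P Q)) = (if lo (NA P Q) = {} then Some (AppS (the (nty [] (NA P Q)))) else None)"
| "lab _ = None"

definition nbp :: "'a nt \<Rightarrow> 'a sym ptree" where
  "nbp X = (\<lambda>c. lab (nsub X c))"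

definition good :: "'a nt \<Rightarrow> bool" where
  "good X \<longleftrightarrow> nty [] X \<noteq> None \<and> nsh X \<and> nnorm X"

lemma ndom_NA: "ndom (NA X Y) = insert [] (Cons 1 ` ndom X \<union> Cons 2 ` ndom Y)"
  unfolding ndom_def
  apply (rule set_eqI)
  subgoal for a by (cases a) (auto split: if_splits)
  done

lemma ndom_NL: "ndom (NL s X) = insert [] (Cons 1 ` ndom X)"
  unfolding ndom_def
  apply (rule set_eqI)
  subgoal for a by (cases a) (auto split: if_splits)
  done

lemma ndom_NF: "ndom (NF t) = {[]}"
  unfolding ndom_def
  apply (rule set_eqI)
  subgoal for a by (cases a) auto
  done

lemma ndom_NB: "ndom (NB j) = {[]}"
  unfolding ndom_def
  apply (rule set_eqI)
  subgoal for a by (cases a) auto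
  done

lemma card_ndom: "finite (ndom X) \<and> card (ndom X) = nsize X"
proof (induction X)
  case (NF x)
  then show ?case by (simp add: ndom_NF)
next
  case (NB x)
  then show ?case by (simp add: ndom_NB)
next
  case (NL s X)
  have "[] \<notin> Cons 1 ` ndom X" by auto
  moreover have "card (Cons 1 ` ndom X) = card (ndom X)" by (rule card_image) simp
  moreover have "finite (Cons 1 ` ndom X)" using NL by simp
  ultimately show ?case using NL unfolding ndom_NL by (simp only: card_insert_disjoint) simp
next
  case (NA X Y)
  have d: "Cons 1 ` ndom X \<inter> Cons 2 ` ndom Y = {}" by auto
  have "card (Cons 1 ` ndom X \<union> Cons 2 ` ndom Y) = card (Cons 1 ` ndom X) + card (Cons 2 ` ndom Y)"
    using NA d by (simp add: card_Un_disjoint)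
  moreover have "[] \<notin> Cons 1 ` ndom X \<union> Cons 2 ` ndom Y" by auto
  ultimately show ?case using NA by (simp add: ndom_NA card_image)
qed

lemma nty_cong:
  "(\<forall>i\<in>lo W. i < length G \<and> i < length G' \<and> G ! i = G' ! i) \<Longrightarrow> nty G W = nty G' W"
proof (induction W arbitrary: G G')
  case (NL s W)
  have "\<forall>i\<in>lo W. i < length (s#G) \<and> i < length (s#G') \<and> (s#G) ! i = (s#G') ! i"
  proof
    fix i assume i: "i \<in> lo W"
    show "i < length (s#G) \<and> i < length (s#G') \<and> (s#G) ! i = (s#G') ! i"
    proof (cases i)
      case 0 then show ?thesis by simp
    next
      case (Suc k)
      then have "k \<in> lo (NL s W)" using i by force
      then show ?thesis using NL.prems Suc by auto
    qed
  qed
  then show ?case using NL.IH[of "s#G" "s#G'"] by simp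
next
  case (NA W1 W2)
  have "nty G W1 = nty G' W1" "nty G W2 = nty G' W2"
    using NA.prems by (auto intro!: NA.IH)
  then show ?case by (simp only: nty.simps)
qed auto

lemma nty_closed: "lo W = {} \<Longrightarrow> nty G W = nty [] W"
  by (rule nty_cong) simp

lemma nty_lo: "nty G W \<noteq> None \<Longrightarrow> i \<in> lo W \<Longrightarrow> i < length G"
proof (induction W arbitrary: G i)
  case (NL s W)
  then obtain j where j: "j \<in> lo W" "j \<noteq> 0" "i = j - 1" by auto
  from NL.prems have "nty (s#G) W \<noteq> None" by auto
  from NL.IH[OF this j(1)] j show ?case by simp
qed (auto split: if_splits option.splits form.splits)



fun ty :: "('v \<Rightarrow> 'a form) \<Rightarrow> 'v trm \<Rightarrow> 'a form option" where
  "ty \<Omega> (Var x) = Some (\<Omega> x)"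
| "ty \<Omega> (Lam x M) = map_option (Imp (\<Omega> x)) (ty \<Omega> M)"
| "ty \<Omega> (App M N) = (case ty \<Omega> M of Some (Imp a b) \<Rightarrow> (if ty \<Omega> N = Some a then Some b else None) | _ \<Rightarrow> None)"

lemma has_type_ty: "has_type ord \<Omega> M \<psi> \<Longrightarrow> ty \<Omega> M = Some \<psi> \<and> hrm ord M"
  by (induction rule: has_type.induct) auto

lemma ty_has_type: "ty \<Omega> M = Some \<psi> \<Longrightarrow> hrm ord M \<Longrightarrow> has_type ord \<Omega> M \<psi>"
proof (induction M arbitrary: \<psi>)
  case (Var x)
  then show ?case using has_type.ty_var by fastforce
next
  case (Lam x M)
  then obtain \<psi>' where "ty \<Omega> M = Some \<psi>'" "\<psi> = Imp (\<Omega> x) \<psi>'" by auto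
  then show ?case using Lam by (auto intro: has_type.ty_lam)
next
  case (App M N)
  then obtain a b where ab: "ty \<Omega> M = Some (Imp a b)" "ty \<Omega> N = Some a" "\<psi> = b"
    by (auto split: option.splits form.splits if_splits)
  then show ?case using App by (auto intro: has_type.ty_app)
qed

lemma has_type_iff: "has_type ord \<Omega> M \<psi> \<longleftrightarrow> ty \<Omega> M = Some \<psi> \<and> hrm ord M"
  by (blast dest: has_type_ty intro: ty_has_type)

lemma type_of_eq: "has_type ord \<Omega> M \<psi> \<Longrightarrow> type_of ord \<Omega> M = \<psi>"
  unfolding type_of_def by (rule the_equality) (auto simp: has_type_iff)

fun idx :: "'v list \<Rightarrow> 'v \<Rightarrow> nat" where
  "idx [] x = 0"
| "idx (y # ys) x = (if x = y then 0 else Suc (idx ys x))"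

lemma idx_less[simp]: "x \<in> set env \<Longrightarrow> idx env x < length env"
  by (induction env) auto

lemma nth_idx[simp]: "x \<in> set env \<Longrightarrow> env ! idx env x = x"
  by (induction env) auto

lemma idx_nth: "distinct env \<Longrightarrow> i < length env \<Longrightarrow> idx env (env ! i) = i"
  by (induction env arbitrary: i) (auto simp: less_Suc_eq_0_disj)

fun nl :: "('v \<Rightarrow> 'a form) \<Rightarrow> 'v list \<Rightarrow> 'v trm \<Rightarrow> 'a nt" where
  "nl \<Omega> env (Var x) = (if x \<in> set env then NB (idx env x) else NF (\<Omega> x))"
| "nl \<Omega> env (Lam x M) = NL (\<Omega> x) (nl \<Omega> (x # env) M)"
| "nl \<Omega> env (App M N) = NA (nl \<Omega> env M) (nl \<Omega> env N)"

lemma nl_nty: "nty (map \<Omega> env) (nl \<Omega> env M) = ty \<Omega> M"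
proof (induction M arbitrary: env)
  case (Var x)
  then show ?case by auto
next
  case (Lam x M)
  then show ?case using Lam.IH[of "x # env"] by simp
next
  case (App M1 M2)
  have "nty (map \<Omega> env) (nl \<Omega> env M1) = ty \<Omega> M1" "nty (map \<Omega> env) (nl \<Omega> env M2) = ty \<Omega> M2"
    by (rule App.IH)+
  then show ?case by (simp only: nl.simps nty.simps ty.simps)
qed

lemma nl_lo: "lo (nl \<Omega> env M) = idx env ` (fv M \<inter> set env)"
proof (induction M arbitrary: env)
  case (Var x)
  then show ?case by auto
next
  case (Lam x M)
  show ?case
  proof (rule set_eqI, rule iffI)
    fix i assume "i \<in> lo (nl \<Omega> env (Lam x M))"
    then obtain j where j: "j \<in> lo (nl \<Omega> (x # env) M)" "j \<noteq> 0" "i = j - 1" by auto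
    then obtain y where y: "y \<in> fv M" "y \<in> set (x#env)" "j = idx (x#env) y" using Lam.IH by auto
    then have "y \<noteq> x" using j by auto
    then show "i \<in> idx env ` (fv (Lam x M) \<inter> set env)" using y j by auto
  next
    fix i assume "i \<in> idx env ` (fv (Lam x M) \<inter> set env)"
    then obtain y where y: "y \<in> fv M" "y \<noteq> x" "y \<in> set env" "i = idx env y" by auto
    then have "Suc i \<in> lo (nl \<Omega> (x # env) M)" using Lam.IH by auto
    then show "i \<in> lo (nl \<Omega> env (Lam x M))" by (force simp: image_iff)
  qed
next
  case (App M N)
  then show ?case by auto
qed

lemma nl_nfc: "(0 < nfc (nl \<Omega> env M)) = (fv M - set env \<noteq> {})"
  by (induction M arbitrary: env) auto

lemma nl_hv: "hv (nl \<Omega> env M) = (fv M \<noteq> {})"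
  unfolding hv_def nl_nfc nl_lo by auto

lemma nl_isNL: "(\<exists>s Z. nl \<Omega> env P = NL s Z) = (\<exists>x Q. P = Lam x Q)"
  by (cases P) auto

lemma nl_norm: "nnorm (nl \<Omega> env M) = beta_normal M"
proof (induction M arbitrary: env)
  case (App M N)
  then show ?case using nl_isNL[of \<Omega> env M] by auto
qed auto

lemma nl_nk: "nk (nl \<Omega> env M) = kind M"
  by (cases M) auto

lemma nl_sub_none: "(nsub (nl \<Omega> env M) c = None) = (subt M c = None)"
proof (induction M arbitrary: env c)
  case (Var x)
  then show ?case by (cases c) auto
next
  case (Lam x M)
  then show ?case by (cases c) auto
next
  case (App M N)
  then show ?case by (cases c) auto
qed

lemma nl_sub: "subt M c = Some N \<Longrightarrow> \<exists>e. nsub (nl \<Omega> env M) c = Some (nl \<Omega> (e @ env) N)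
   \<and> set e \<subseteq> set (binders M) \<and> fv N \<subseteq> fv M \<union> set e"
proof (induction M arbitrary: env c N)
  case (Var x)
  then show ?case by (cases c) auto
next
  case (Lam x M)
  show ?case
  proof (cases c)
    case Nil
    then show ?thesis using Lam by (intro exI[of _ "[]"]) auto
  next
    case (Cons i c')
    then have i: "i = 1" "subt M c' = Some N" using Lam.prems by (auto split: if_splits)
    from Lam.IH[OF i(2), of "x # env"] obtain e where
      e: "nsub (nl \<Omega> (x # env) M) c' = Some (nl \<Omega> (e @ x # env) N)"
         "set e \<subseteq> set (binders M)" "fv N \<subseteq> fv M \<union> set e" by blast
    show ?thesis using e i Cons by (intro exI[of _ "e @ [x]"]) auto
  qed
next
  case (App M1 M2)
  show ?case
  proof (cases c)
    case Nil
    then show ?thesis using App by (intro exI[of _ "[]"]) auto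
  next
    case (Cons i c')
    show ?thesis
    proof (cases "i = 1")
      case True
      then have "subt M1 c' = Some N" using App.prems Cons by auto
      from App.IH(1)[OF this, of env] obtain e where
        e: "nsub (nl \<Omega> env M1) c' = Some (nl \<Omega> (e @ env) N)"
           "set e \<subseteq> set (binders M1)" "fv N \<subseteq> fv M1 \<union> set e" by blast
      show ?thesis using e True Cons by (intro exI[of _ e]) auto
    next
      case False
      then have "i = 2" "subt M2 c' = Some N" using App.prems Cons by (auto split: if_splits)
      from App.IH(2)[OF this(2), of env] obtain e where
        e: "nsub (nl \<Omega> env M2) c' = Some (nl \<Omega> (e @ env) N)"
           "set e \<subseteq> set (binders M2)" "fv N \<subseteq> fv M2 \<union> set e" by blast
      show ?thesis using e \<open>i = 2\<close> Cons by (intro exI[of _ e]) auto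
    qed
  qed
qed

lemma tdom_nl: "tdom M = ndom (nl \<Omega> env M)"
  unfolding tdom_def ndom_def using nl_sub_none[of \<Omega> env M] by auto

lemma card_tdom: "card (tdom M) = nsize (nl \<Omega> env M)"
  using tdom_nl card_ndom by metis

lemma ty_sub: "ty \<Omega> M \<noteq> None \<Longrightarrow> subt M c = Some N \<Longrightarrow> ty \<Omega> N \<noteq> None"
proof (induction M arbitrary: c)
  case (Var x)
  then show ?case by (cases c) auto
next
  case (Lam x M)
  then show ?case by (cases c) (auto split: if_splits)
next
  case (App M1 M2)
  then show ?case by (cases c) (auto split: if_splits option.splits form.splits)
qed

lemma hrm_sub: "hrm ord M \<Longrightarrow> subt M c = Some N \<Longrightarrow> hrm ord N"
proof (induction M arbitrary: c)
  case (Var x)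
  then show ?case by (cases c) auto
next
  case (Lam x M)
  then show ?case by (cases c) (auto split: if_splits)
next
  case (App M1 M2)
  then show ?case by (cases c) (auto split: if_splits)
qed

lemma LNF_iff: "M \<in> LNF ord \<Omega> \<longleftrightarrow> wf_trm M \<and> ty \<Omega> M \<noteq> None \<and> hrm ord M \<and> beta_normal M"
  unfolding LNF_def using has_type_iff by fastforce

lemma bp_bridge:
  assumes "M \<in> LNF ord \<Omega>"
  shows "blueprint_of ord \<Omega> M = nbp (nl \<Omega> [] M)"
proof (rule ext)
  fix c
  have wf: "set (binders M) \<inter> fv M = {}" and tyM: "ty \<Omega> M \<noteq> None" and hM: "hrm ord M"
    using assms unfolding LNF_iff wf_trm_def by auto
  show "blueprint_of ord \<Omega> M c = nbp (nl \<Omega> [] M) c"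
  proof (cases "subt M c")
    case None
    then have "nsub (nl \<Omega> [] M) c = None" using nl_sub_none by metis
    then show ?thesis using None unfolding blueprint_of_def nbp_def stable_part_def by auto
  next
    case (Some N)
    from nl_sub[OF Some, of \<Omega> "[]"] obtain e where
      e: "nsub (nl \<Omega> [] M) c = Some (nl \<Omega> e N)" "set e \<subseteq> set (binders M)" "fv N \<subseteq> fv M \<union> set e"
      by auto
    have st: "c \<in> stable_part M \<longleftrightarrow> fv N \<inter> set e = {} \<and> kind N \<noteq> 2"
      using e(2,3) wf Some unfolding stable_part_def tdom_def by auto
    have tyN: "ty \<Omega> N \<noteq> None" using ty_sub[OF tyM Some] .
    have hN: "hrm ord N" using hrm_sub[OF hM Some] .
    then obtain \<psi> where psi: "ty \<Omega> N = Some \<psi>" using tyN by auto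
    then have htN: "has_type ord \<Omega> N \<psi>" using hN ty_has_type by metis
    show ?thesis
    proof (cases N)
      case (Var x)
      then show ?thesis using st e Some htN type_of_eq[OF htN] psi
        unfolding blueprint_of_def nbp_def by auto
    next
      case (Lam x R)
      then show ?thesis using st e Some unfolding blueprint_of_def nbp_def by auto
    next
      case (App P Q)
      have lo: "lo (nl \<Omega> e N) = {} \<longleftrightarrow> fv N \<inter> set e = {}" unfolding nl_lo by auto
      have "nty [] (nl \<Omega> e N) = Some \<psi>" if "fv N \<inter> set e = {}"
      proof -
        have "nty [] (nl \<Omega> e N) = nty (map \<Omega> e) (nl \<Omega> e N)"
          using nty_closed lo that by metis
        then show ?thesis using nl_nty psi by metis
      qed
      then show ?thesis using st e Some lo type_of_eq[OF htN] App
        unfolding blueprint_of_def nbp_def by auto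
    qed
  qed
qed



lemma idx_take: "z \<in> set (take (Suc i) env) \<Longrightarrow> idx env z \<le> i"
proof (induction env arbitrary: i)
  case (Cons y ys)
  then show ?case by (cases i) auto
qed auto

lemma nl_sh:
  assumes "hrm ord M" "inj ord"
    and "\<forall>i<length env. \<forall>z\<in>fv M. z \<notin> set (take (Suc i) env) \<longrightarrow> ord z < ord (env ! i)"
  shows "nsh (nl \<Omega> env M)"
  using assms
proof (induction M arbitrary: env)
  case (Var x)
  then show ?case by simp
next
  case (Lam x R)
  have h: "hrm ord R" "x \<in> fv R" "\<forall>y\<in>fv R. ord y \<le> ord x" using Lam.prems by auto
  have inv: "\<forall>i<length (x#env). \<forall>z\<in>fv R. z \<notin> set (take (Suc i) (x#env)) \<longrightarrow> ord z < ord ((x#env) ! i)"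
  proof (intro allI impI ballI)
    fix i z assume i: "i < length (x#env)" and z: "z \<in> fv R" and nz: "z \<notin> set (take (Suc i) (x#env))"
    show "ord z < ord ((x#env) ! i)"
    proof (cases i)
      case 0
      then have "z \<noteq> x" using nz by auto
      then have "ord z \<noteq> ord x" using Lam.prems(2) by (metis injD)
      then show ?thesis using h z 0 by force
    next
      case (Suc k)
      then have "z \<noteq> x" "z \<notin> set (take (Suc k) env)" "k < length env" using nz i by auto
      then show ?thesis using Lam.prems(3) z Suc by auto
    qed
  qed
  have "0 \<in> lo (nl \<Omega> (x#env) R)" unfolding nl_lo using h(2) by (force simp: image_iff)
  then show ?case using Lam.IH[OF h(1) Lam.prems(2) inv] by simp
next
  case (App P Q)
  have hP: "hrm ord P" and hQ: "hrm ord Q" and c: "\<forall>y\<in>fv P. \<exists>z\<in>fv Q. ord y \<le> ord z"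
    using App.prems by auto
  have invP: "\<forall>i<length env. \<forall>z\<in>fv P. z \<notin> set (take (Suc i) env) \<longrightarrow> ord z < ord (env ! i)"
    using App.prems(3) by auto
  have invQ: "\<forall>i<length env. \<forall>z\<in>fv Q. z \<notin> set (take (Suc i) env) \<longrightarrow> ord z < ord (env ! i)"
    using App.prems(3) by auto
  have c1: "\<forall>i\<in>lo (nl \<Omega> env P). \<exists>j\<in>lo (nl \<Omega> env Q). j \<le> i"
  proof
    fix i assume "i \<in> lo (nl \<Omega> env P)"
    then obtain x where x: "x \<in> fv P" "x \<in> set env" "i = idx env x" unfolding nl_lo by auto
    then have il: "i < length env" and ex: "env ! i = x" by auto
    obtain z where z: "z \<in> fv Q" "ord x \<le> ord z" using c x by auto
    have "z \<in> set (take (Suc i) env)"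
    proof (rule ccontr)
      assume "z \<notin> set (take (Suc i) env)"
      then have "ord z < ord (env ! i)" using invQ il z(1) by blast
      then show False using z ex by simp
    qed
    then have "idx env z \<le> i" "z \<in> set env" using idx_take in_set_takeD by fastforce+
    then show "\<exists>j\<in>lo (nl \<Omega> env Q). j \<le> i" unfolding nl_lo using z by auto
  qed
  have c2: "hv (nl \<Omega> env P) \<longrightarrow> hv (nl \<Omega> env Q)"
    unfolding nl_hv using c by auto
  show ?case using App.IH(1)[OF hP App.prems(2) invP] App.IH(2)[OF hQ App.prems(2) invQ] c1 c2
    by simp
qed

lemma good_nl:
  assumes "M \<in> LNF ord \<Omega>" "inj ord"
  shows "good (nl \<Omega> [] M)"
proof -
  have "ty \<Omega> M \<noteq> None" "hrm ord M" "beta_normal M" using assms(1) unfolding LNF_iff by auto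
  moreover have "nty [] (nl \<Omega> [] M) = ty \<Omega> M" using nl_nty[of \<Omega> "[]" M] by simp
  ultimately show ?thesis unfolding good_def using nl_sh[of ord M "[]" \<Omega>] assms(2) nl_norm by auto
qed



lemma nsub_append: "nsub X (a @ e) = (case nsub X a of None \<Rightarrow> None | Some W \<Rightarrow> nsub W e)"
proof (induction X arbitrary: a)
  case (NF t) then show ?case by (cases a) auto
next
  case (NB j) then show ?case by (cases a) auto
next
  case (NL s X) then show ?case by (cases a) auto
next
  case (NA X Y) then show ?case by (cases a) auto
qed

lemma nrepl_sub_in: "nsub X a \<noteq> None \<Longrightarrow> nsub (nrepl X a Z) (a @ d) = nsub Z d"
proof (induction X arbitrary: a)
  case (NF t) then show ?case by (cases a) auto
next
  case (NB j) then show ?case by (cases a) auto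
next
  case (NL s X) then show ?case by (cases a) auto
next
  case (NA X Y) then show ?case by (cases a) auto
qed

lemma nrepl_sub_out: "\<not> prefix a c \<Longrightarrow> \<not> prefix c a \<Longrightarrow> nsub (nrepl X a Z) c = nsub X c"
proof (induction X arbitrary: a c)
  case (NF t) then show ?case by (cases a; cases c) auto
next
  case (NB j) then show ?case by (cases a; cases c) auto
next
  case (NL s X) then show ?case by (cases a; cases c) auto
next
  case (NA X Y) then show ?case by (cases a; cases c) auto
qed

lemma nrepl_sub_above: "nsub X c = Some V \<Longrightarrow> nsub (nrepl X (c @ d) Z) c = Some (nrepl V d Z)"
proof (induction X arbitrary: c)
  case (NF t) then show ?case by (cases c) auto
next
  case (NB j) then show ?case by (cases c) auto
next
  case (NL s X) then show ?case by (cases c) (auto split: if_splits)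
next
  case (NA X Y) then show ?case by (cases c) (auto split: if_splits)
qed

lemma nrepl_lo: "nsub X a = Some W \<Longrightarrow> lo W = {} \<Longrightarrow> lo Z = {} \<Longrightarrow> lo (nrepl X a Z) = lo X"
proof (induction X arbitrary: a)
  case (NF t) then show ?case by (cases a) auto
next
  case (NB j) then show ?case by (cases a) auto
next
  case (NL s X) then show ?case by (cases a) (auto split: if_splits)
next
  case (NA X Y) then show ?case by (cases a) (auto split: if_splits)
qed

lemma nrepl_nfc: "nsub X a \<noteq> None \<Longrightarrow> 0 < nfc Z \<Longrightarrow> 0 < nfc (nrepl X a Z)"
proof (induction X arbitrary: a)
  case (NF t) then show ?case by (cases a) auto
next
  case (NB j) then show ?case by (cases a) auto
next
  case (NL s X) then show ?case by (cases a) (auto split: if_splits)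
next
  case (NA X Y) then show ?case by (cases a) (auto split: if_splits)
qed

lemma sub_nfc: "nsub X a = Some W \<Longrightarrow> 0 < nfc W \<Longrightarrow> 0 < nfc X"
proof (induction X arbitrary: a)
  case (NF t) then show ?case by (cases a) auto
next
  case (NB j) then show ?case by (cases a) auto
next
  case (NL s X) then show ?case by (cases a) (auto split: if_splits)
next
  case (NA X Y) then show ?case by (cases a) (auto split: if_splits)
qed

lemma nrepl_hv: "nsub X a = Some W \<Longrightarrow> 0 < nfc W \<Longrightarrow> 0 < nfc Z \<Longrightarrow> hv (nrepl X a Z) \<and> hv X"
proof -
  assume a: "nsub X a = Some W" "0 < nfc W" "0 < nfc Z"
  have "0 < nfc (nrepl X a Z)" using a nrepl_nfc[of X a Z] by simp
  moreover have "0 < nfc X" using a sub_nfc[of X a W] by simp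
  ultimately show ?thesis unfolding hv_def by simp
qed

lemma nrepl_nsh:
  "nsh X \<Longrightarrow> nsh Z \<Longrightarrow> nsub X a = Some W \<Longrightarrow> lo W = {} \<Longrightarrow> lo Z = {} \<Longrightarrow> 0 < nfc W \<Longrightarrow> 0 < nfc Z
   \<Longrightarrow> nsh (nrepl X a Z)"
proof (induction X arbitrary: a)
  case (NF t) then show ?case by (cases a) auto
next
  case (NB j) then show ?case by (cases a) auto
next
  case (NL s X)
  show ?case
  proof (cases a)
    case Nil then show ?thesis using NL by auto
  next
    case (Cons i a')
    show ?thesis
    proof (cases "i = 1")
      case True
      then have s: "nsub X a' = Some W" using NL.prems Cons by auto
      have ih: "nsh (nrepl X a' Z)" using NL.IH[OF _ NL.prems(2) s NL.prems(4-7)] NL.prems(1) by simp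
      have lo: "lo (nrepl X a' Z) = lo X" using nrepl_lo[OF s NL.prems(4,5)] .
      have e: "nrepl (NL s X) a Z = NL s (nrepl X a' Z)" using True Cons by simp
      show ?thesis unfolding e nsh.simps lo using ih NL.prems(1) by simp
    next
      case False then show ?thesis using NL.prems Cons by auto
    qed
  qed
next
  case (NA X Y)
  show ?case
  proof (cases a)
    case Nil then show ?thesis using NA by auto
  next
    case (Cons i a')
    show ?thesis
    proof (cases "i = 1")
      case True
      then have s: "nsub X a' = Some W" using NA.prems Cons by auto
      have "hv X" using nrepl_hv[OF s NA.prems(6,7)] by auto
      then have hY: "hv Y" using NA.prems(1) by auto
      have ih: "nsh (nrepl X a' Z)" using NA.IH(1)[OF _ NA.prems(2) s NA.prems(4-7)] NA.prems(1) by simp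
      have lo: "lo (nrepl X a' Z) = lo X" using nrepl_lo[OF s NA.prems(4,5)] .
      have e: "nrepl (NA X Y) a Z = NA (nrepl X a' Z) Y" using True Cons by simp
      show ?thesis unfolding e nsh.simps lo using ih NA.prems(1) hY by simp
    next
      case False
      show ?thesis
      proof (cases "i = 2")
        case True
        then have s: "nsub Y a' = Some W" using NA.prems Cons by auto
        have hv: "hv (nrepl Y a' Z)" using nrepl_hv[OF s NA.prems(6,7)] by auto
        have ih: "nsh (nrepl Y a' Z)" using NA.IH(2)[OF _ NA.prems(2) s NA.prems(4-7)] NA.prems(1) by simp
        have lo: "lo (nrepl Y a' Z) = lo Y" using nrepl_lo[OF s NA.prems(4,5)] .
        have e: "nrepl (NA X Y) a Z = NA X (nrepl Y a' Z)" using True False Cons by simp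
        show ?thesis unfolding e nsh.simps lo using ih NA.prems(1) hv by simp
      next
        case False2: False
        then show ?thesis using NA.prems Cons False by auto
      qed
    qed
  qed
qed

lemma nrepl_notNL: "nsub X a \<noteq> None \<Longrightarrow> (\<forall>s V. X \<noteq> NL s V) \<Longrightarrow> (\<forall>s V. Z \<noteq> NL s V) \<Longrightarrow> (\<forall>s V. nrepl X a Z \<noteq> NL s V)"
  by (cases a; cases X) auto

lemma nrepl_nnorm:
  "nnorm X \<Longrightarrow> nnorm Z \<Longrightarrow> (\<forall>s V. Z \<noteq> NL s V) \<Longrightarrow> nsub X a \<noteq> None \<Longrightarrow> nnorm (nrepl X a Z)"
proof (induction X arbitrary: a)
  case (NF t) then show ?case by (cases a) auto
next
  case (NB j) then show ?case by (cases a) auto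
next
  case (NL s X) then show ?case by (cases a) (auto split: if_splits)
next
  case (NA X Y)
  show ?case
  proof (cases a)
    case Nil then show ?thesis using NA by auto
  next
    case (Cons i a')
    then show ?thesis using NA nrepl_notNL[of X a' Z] by (auto split: if_splits)
  qed
qed

lemma nrepl_nty: "nsub X a = Some W \<Longrightarrow> (\<forall>G'. nty G' W = nty G' Z) \<Longrightarrow> nty G (nrepl X a Z) = nty G X"
proof (induction X arbitrary: a G)
  case (NF t) then show ?case by (cases a) auto
next
  case (NB j) then show ?case by (cases a) auto
next
  case (NL s X)
  show ?case
  proof (cases a)
    case Nil then show ?thesis using NL by auto
  next
    case (Cons i a')
    then show ?thesis using NL.prems NL.IH[of a' "s # G"] by (auto split: if_splits)
  qed
next
  case (NA X Y)
  show ?case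
  proof (cases a)
    case Nil then show ?thesis using NA by auto
  next
    case (Cons i a')
    show ?thesis
    proof (cases "i = 1")
      case True
      then have h: "nty G (nrepl X a' Z) = nty G X" using NA.prems Cons NA.IH(1)[of a' G] by auto
      have e: "nrepl (NA X Y) a Z = NA (nrepl X a' Z) Y" using True Cons by simp
      show ?thesis unfolding e nty.simps h ..
    next
      case False
      show ?thesis
      proof (cases "i = 2")
        case True
        then have h: "nty G (nrepl Y a' Z) = nty G Y" using NA.prems Cons NA.IH(2)[of a' G] by auto
        have e: "nrepl (NA X Y) a Z = NA X (nrepl Y a' Z)" using True Cons by simp
        show ?thesis unfolding e nty.simps h ..
      next
        case False2: False
        then show ?thesis using False Cons by simp
      qed
    qed
  qed
qed

lemma sub_nsh: "nsh X \<Longrightarrow> nsub X c = Some W \<Longrightarrow> nsh W"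
proof (induction X arbitrary: c)
  case (NF t) then show ?case by (cases c) auto
next
  case (NB j) then show ?case by (cases c) auto
next
  case (NL s X) then show ?case by (cases c) (auto split: if_splits)
next
  case (NA X Y) then show ?case by (cases c) (auto split: if_splits)
qed

lemma sub_nnorm: "nnorm X \<Longrightarrow> nsub X c = Some W \<Longrightarrow> nnorm W"
proof (induction X arbitrary: c)
  case (NF t) then show ?case by (cases c) auto
next
  case (NB j) then show ?case by (cases c) auto
next
  case (NL s X) then show ?case by (cases c) (auto split: if_splits)
next
  case (NA X Y) then show ?case by (cases c) (auto split: if_splits)
qed

lemma sub_nty: "nty G X \<noteq> None \<Longrightarrow> nsub X c = Some W \<Longrightarrow> \<exists>G'. nty G' W \<noteq> None"
proof (induction X arbitrary: c G)
  case (NF t) then show ?case by (cases c) (auto intro!: exI[of _ G])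
next
  case (NB j) then show ?case by (cases c) (auto intro!: exI[of _ G])
next
  case (NL s X)
  show ?case
  proof (cases c)
    case Nil then show ?thesis using NL.prems by (auto intro!: exI[of _ G])
  next
    case (Cons i c')
    then have "nsub X c' = Some W" using NL.prems by (auto split: if_splits)
    moreover have "nty (s#G) X \<noteq> None" using NL.prems by auto
    ultimately show ?thesis using NL.IH by blast
  qed
next
  case (NA X Y)
  have tX: "nty G X \<noteq> None" and tY: "nty G Y \<noteq> None"
    using NA.prems(1) by (auto split: option.splits form.splits if_splits)
  show ?case
  proof (cases c)
    case Nil then show ?thesis using NA.prems by (auto intro!: exI[of _ G])
  next
    case (Cons i c')
    then have "nsub X c' = Some W \<or> nsub Y c' = Some W" using NA.prems by (auto split: if_splits)
    then show ?thesis using NA.IH tX tY by blast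
  qed
qed

lemma closed_nfc: "lo W = {} \<Longrightarrow> nnorm W \<Longrightarrow> nk W \<noteq> 2 \<Longrightarrow> 0 < nfc W"
proof (induction W)
  case (NA X Y)
  then have "nk X \<noteq> 2" by (cases X) auto
  then show ?case using NA by auto
qed auto

lemma nrepl_nsize: "nsub X a = Some W \<Longrightarrow> nsize (nrepl X a Z) + nsize W = nsize X + nsize Z"
proof (induction X arbitrary: a)
  case (NF t) then show ?case by (cases a) auto
next
  case (NB j) then show ?case by (cases a) auto
next
  case (NL s X) then show ?case by (cases a) (auto split: if_splits)
next
  case (NA X Y) then show ?case by (cases a) (auto split: if_splits)
qed

lemma sub_nsize: "nsub X a = Some W \<Longrightarrow> nsize W \<le> nsize X"
proof (induction X arbitrary: a)
  case (NF t) then show ?case by (cases a) auto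
next
  case (NB j) then show ?case by (cases a) auto
next
  case (NL s X) then show ?case by (cases a) (auto split: if_splits, fastforce)
next
  case (NA X Y) then show ?case by (cases a) (auto split: if_splits, fastforce+)
qed

lemma nrepl_nk: "a \<noteq> [] \<Longrightarrow> nk (nrepl X a Z) = nk X"
  by (cases a; cases X) auto

lemma lab_nrepl:
  assumes "d \<noteq> []" "nsub V d = Some W" "lo W = {}" "lo Z = {}" "\<forall>G. nty G W = nty G Z"
  shows "lab (Some (nrepl V d Z)) = lab (Some V)"
proof (cases V)
  case (NA P Q)
  obtain i d' where d: "d = i # d'" using assms(1) by (cases d) auto
  have lo: "lo (nrepl V d Z) = lo V" using nrepl_lo[OF assms(2-4)] .
  have ty: "nty [] (nrepl V d Z) = nty [] V" using nrepl_nty[OF assms(2)] assms(5) by blast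
  obtain P' Q' where e: "nrepl V d Z = NA P' Q'"
    using NA d by (cases "i = 1"; cases "i = 2") auto
  show ?thesis using lo ty e NA by simp
next
  case (NL s X)
  obtain i d' where d: "d = i # d'" using assms(1) by (cases d) auto
  then show ?thesis using NL by (auto split: if_splits)
next
  case (NF t)
  obtain i d' where d: "d = i # d'" using assms(1) by (cases d) auto
  then show ?thesis using NF by auto
next
  case (NB j)
  obtain i d' where d: "d = i # d'" using assms(1) by (cases d) auto
  then show ?thesis using NB by auto
qed

lemma lab_Some: "lab (Some W) = Some l \<Longrightarrow>
   (\<exists>t. W = NF t \<and> l = FormS t) \<or> (\<exists>P Q. W = NA P Q \<and> lo W = {} \<and> l = AppS (the (nty [] W)))"
  by (cases W) (auto split: if_splits)



lemma lab_eq: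
  assumes "lab (Some Wa) = lab (Some Wb)" "lab (Some Wa) \<noteq> None" "nty [] Wa \<noteq> None" "nty [] Wb \<noteq> None"
  shows "lo Wa = {} \<and> lo Wb = {} \<and> nk Wa = nk Wb \<and> nk Wa \<noteq> 2 \<and> nty [] Wa = nty [] Wb"
  using assms by (cases Wa; cases Wb) (auto split: if_splits)

lemma step:
  assumes g: "good X" and adom: "a \<in> dom (nbp X)" and bdom: "b \<in> dom (nbp X)"
    and ab: "strict_prefix a b" and eq: "nbp X a = nbp X b"
  shows "\<exists>Y. good Y \<and> nbp Y = ptrepl (nbp X) a (ptsub (nbp X) b) \<and> nk Y = nk X \<and>
             nty [] Y = nty [] X \<and> nsize Y \<le> nsize X"
proof -
  have tX: "nty [] X \<noteq> None" and shX: "nsh X" and nX: "nnorm X" using g unfolding good_def by auto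
  obtain Wa where Wa: "nsub X a = Some Wa" using adom unfolding nbp_def by (cases "nsub X a") auto
  obtain Wb where Wb: "nsub X b = Some Wb" using bdom unfolding nbp_def by (cases "nsub X b") auto
  obtain e where e: "b = a @ e" "e \<noteq> []" using ab by (auto simp: strict_prefix_def prefix_def)
  have WaWb: "nsub Wa e = Some Wb" using Wb Wa e nsub_append[of X a e] by simp
  have la: "lab (Some Wa) = lab (Some Wb)" "lab (Some Wa) \<noteq> None"
    using eq adom Wa Wb unfolding nbp_def by auto
  have ta: "nty [] Wa \<noteq> None"
  proof -
    obtain G where "nty G Wa \<noteq> None" using sub_nty[OF tX Wa] by auto
    moreover have "lo Wa = {}" using la by (cases Wa) (auto split: if_splits)
    ultimately show ?thesis using nty_closed by metis
  qed
  have tb: "nty [] Wb \<noteq> None"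
  proof -
    obtain G where "nty G Wb \<noteq> None" using sub_nty[OF tX Wb] by auto
    moreover have "lab (Some Wb) \<noteq> None" using la by simp
    then have "lo Wb = {}" by (cases Wb) (auto split: if_splits)
    ultimately show ?thesis using nty_closed by metis
  qed
  have L: "lo Wa = {}" "lo Wb = {}" "nk Wa = nk Wb" "nk Wa \<noteq> 2" "nty [] Wa = nty [] Wb"
    using lab_eq[OF la ta tb] by auto
  have tyeq: "\<forall>G. nty G Wa = nty G Wb" using L nty_closed by metis
  have nWa: "nnorm Wa" and nWb: "nnorm Wb" using sub_nnorm[OF nX] Wa Wb by auto
  have sWb: "nsh Wb" using sub_nsh[OF shX Wb] .
  have notNL: "\<forall>s V. Wb \<noteq> NL s V" using L by auto
  have fa: "0 < nfc Wa" using closed_nfc[OF L(1) nWa L(4)] .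
  have fb: "0 < nfc Wb" using closed_nfc[OF L(2) nWb] L(3,4) by simp
  define Y where "Y = nrepl X a Wb"
  have tyY: "nty [] Y = nty [] X" unfolding Y_def using nrepl_nty[OF Wa tyeq] .
  have shY: "nsh Y" unfolding Y_def using nrepl_nsh[OF shX sWb Wa L(1,2) fa fb] .
  have nY: "nnorm Y" unfolding Y_def using nrepl_nnorm[OF nX nWb notNL] Wa by simp
  have gY: "good Y" unfolding good_def using tyY tX shY nY by simp
  have bpY: "nbp Y = ptrepl (nbp X) a (ptsub (nbp X) b)"
  proof (rule ext)
    fix c
    show "nbp Y c = ptrepl (nbp X) a (ptsub (nbp X) b) c"
    proof (cases "prefix a c")
      case True
      then obtain d where d: "c = a @ d" by (auto simp: prefix_def)
      have "nsub Y c = nsub Wb d" unfolding Y_def d using nrepl_sub_in[of X a Wb d] Wa by simp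
      moreover have "nsub X (b @ d) = nsub Wb d" using nsub_append[of X b d] Wb by simp
      ultimately show ?thesis using True d e unfolding nbp_def ptrepl_def ptsub_def by simp
    next
      case False
      show ?thesis
      proof (cases "prefix c a")
        case True
        then obtain d where d: "a = c @ d" by (auto simp: prefix_def)
        have dne: "d \<noteq> []" using d False by auto
        obtain V where V: "nsub X c = Some V" "nsub V d = Some Wa"
          using nsub_append[of X c d] Wa d by (cases "nsub X c") auto
        have "nsub Y c = Some (nrepl V d Wb)" unfolding Y_def d using nrepl_sub_above[OF V(1)] .
        moreover have "lab (Some (nrepl V d Wb)) = lab (Some V)"
          using lab_nrepl[OF dne V(2) L(1,2) tyeq] .
        ultimately show ?thesis using False V unfolding nbp_def ptrepl_def by simp
      next
        case False2: False
        have "nsub Y c = nsub X c" unfolding Y_def using nrepl_sub_out[OF False False2] .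
        then show ?thesis using False unfolding nbp_def ptrepl_def by simp
      qed
    qed
  qed
  have nkY: "nk Y = nk X"
  proof (cases "a = []")
    case True
    then have "Y = Wb" "X = Wa" unfolding Y_def using Wa by auto
    then show ?thesis using L by simp
  next
    case False
    then show ?thesis unfolding Y_def using nrepl_nk by metis
  qed
  have "nsize Y + nsize Wa = nsize X + nsize Wb" unfolding Y_def using nrepl_nsize[OF Wa] .
  moreover have "nsize Wb \<le> nsize Wa" using sub_nsize[OF WaWb] .
  ultimately have "nsize Y \<le> nsize X" by simp
  then show ?thesis using gY bpY nkY tyY by blast
qed

lemma vc:
  "vcomp \<alpha> \<beta> \<Longrightarrow> \<beta> = nbp X \<Longrightarrow> good X \<Longrightarrow>
   \<exists>Y. good Y \<and> nbp Y = \<alpha> \<and> nk Y = nk X \<and> nty [] Y = nty [] X \<and> nsize Y \<le> nsize X"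
proof (induction arbitrary: X rule: vcomp.induct)
  case (vc_refl \<beta>)
  then show ?case by blast
next
  case (vc_step \<beta> a b)
  then show ?case using step by blast
next
  case (vc_trans \<alpha> \<beta> \<gamma>)
  obtain Y1 where Y1: "good Y1" "nbp Y1 = \<beta>" "nk Y1 = nk X" "nty [] Y1 = nty [] X" "nsize Y1 \<le> nsize X"
    using vc_trans.IH(2)[OF vc_trans.prems] by blast
  obtain Y where Y: "good Y" "nbp Y = \<alpha>" "nk Y = nk Y1" "nty [] Y = nty [] Y1" "nsize Y \<le> nsize Y1"
    using vc_trans.IH(1)[OF Y1(2)[symmetric] Y1(1)] by blast
  show ?case using Y Y1 by (intro exI[of _ Y]) auto
qed



type_synonym 'a wv = "(nat \<times> 'a form) + (addr \<times> 'a form)"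

fun rz :: "nat \<Rightarrow> addr \<Rightarrow> 'a wv list \<Rightarrow> 'a nt \<Rightarrow> 'a wv trm \<times> nat" where
  "rz n p env (NF t) = (Var (Inl (n, t)), Suc n)"
| "rz n p env (NB i) = (Var (env ! i), n)"
| "rz n p env (NL s X) = (Lam (Inr (p, s)) (fst (rz n (p @ [1]) (Inr (p, s) # env) X)),
                         snd (rz n (p @ [1]) (Inr (p, s) # env) X))"
| "rz n p env (NA X Y) = (App (fst (rz n (p @ [1]) env X)) (fst (rz (snd (rz n (p @ [1]) env X)) (p @ [2]) env Y)),
                         snd (rz (snd (rz n (p @ [1]) env X)) (p @ [2]) env Y))"

definition OW :: "'a wv \<Rightarrow> 'a form" where "OW = case_sum snd snd"

fun alen :: "'a wv \<Rightarrow> nat" where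
  "alen (Inl u) = 0"
| "alen (Inr (q, s)) = length q"

definition ENV :: "addr \<Rightarrow> 'a wv list \<Rightarrow> bool" where
  "ENV p env \<longleftrightarrow> (\<forall>u\<in>set env. \<exists>q s. u = Inr (q, s) \<and> strict_prefix q p) \<and>
                 sorted_wrt (\<lambda>u v. alen v < alen u) env"

lemma ENV_cons: "ENV p env \<Longrightarrow> ENV (p @ [1]) (Inr (p, s) # env)"
  unfolding ENV_def
  by (auto simp: strict_prefix_def prefix_def)

lemma ENV_app: "ENV p env \<Longrightarrow> ENV (p @ [i]) env"
  unfolding ENV_def by (auto simp: strict_prefix_def prefix_def)

lemma ENV_distinct: "ENV p env \<Longrightarrow> distinct env"
  unfolding ENV_def
  by (induction env) auto

lemma ENV_len: "ENV p env \<Longrightarrow> u \<in> set env \<Longrightarrow> \<exists>q s. u = Inr (q, s) \<and> length q < length p"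
  unfolding ENV_def using prefix_length_less by fastforce

lemma rz_cnt: "snd (rz n p env X) = n + nfc X"
  by (induction X arbitrary: n p env) auto

lemma rz_nl: "ENV p env \<Longrightarrow> lo X \<subseteq> {..<length env} \<Longrightarrow> nl OW env (fst (rz n p env X)) = X"
proof (induction X arbitrary: n p env)
  case (NF t)
  have "Inl (n, t) \<notin> set env" using NF.prems unfolding ENV_def by auto
  then show ?case by (simp add: OW_def)
next
  case (NB i)
  then have "i < length env" by simp
  then show ?case using idx_nth[OF ENV_distinct[OF NB.prems(1)]] by simp
next
  case (NL s X)
  have "lo X \<subseteq> {..<length (Inr (p, s) # env)}"
  proof
    fix i assume i: "i \<in> lo X"
    show "i \<in> {..<length (Inr (p, s) # env)}"
    proof (cases i)
      case (Suc j)
      then have "j \<in> lo (NL s X)" using i by force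
      then show ?thesis using NL.prems Suc by auto
    qed simp
  qed
  then show ?case using NL.IH[OF ENV_cons[OF NL.prems(1)]] by (simp add: OW_def)
next
  case (NA X Y)
  then show ?case using ENV_app[OF NA.prems(1)] by simp
qed

lemma lo_NL_bound: "lo (NL s X) \<subseteq> {..<length env} \<Longrightarrow> lo X \<subseteq> {..<length (u # env)}"
proof
  fix i assume a: "lo (NL s X) \<subseteq> {..<length env}" and i: "i \<in> lo X"
  show "i \<in> {..<length (u # env)}"
  proof (cases i)
    case (Suc j)
    then have "j \<in> lo (NL s X)" using i by force
    then show ?thesis using a Suc by auto
  qed simp
qed

lemma rz_fv:
  "ENV p env \<Longrightarrow> lo X \<subseteq> {..<length env} \<Longrightarrow> y \<in> fv (fst (rz n p env X)) \<Longrightarrow>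
   (\<exists>k t. y = Inl (k, t) \<and> n \<le> k \<and> k < n + nfc X) \<or> (\<exists>i\<in>lo X. y = env ! i)"
proof (induction X arbitrary: n p env y)
  case (NF t)
  then show ?case by auto
next
  case (NB i)
  then show ?case by auto
next
  case (NL s X)
  have y: "y \<in> fv (fst (rz n (p @ [1]) (Inr (p, s) # env) X))" "y \<noteq> Inr (p, s)" using NL.prems by auto
  from NL.IH[OF ENV_cons[OF NL.prems(1)] lo_NL_bound[OF NL.prems(2)] y(1)]
  show ?case
  proof
    assume "\<exists>k t. y = Inl (k, t) \<and> n \<le> k \<and> k < n + nfc X"
    then show ?thesis by auto
  next
    assume "\<exists>i\<in>lo X. y = (Inr (p, s) # env) ! i"
    then obtain i where i: "i \<in> lo X" "y = (Inr (p, s) # env) ! i" by auto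
    then obtain j where j: "i = Suc j" using y(2) by (cases i) auto
    then have "j \<in> lo (NL s X)" using i by force
    then show ?thesis using i j by auto
  qed
next
  case (NA X Y)
  let ?n1 = "snd (rz n (p @ [1]) env X)"
  have n1: "?n1 = n + nfc X" using rz_cnt .
  from NA.prems(3) have "y \<in> fv (fst (rz n (p @ [1]) env X)) \<or> y \<in> fv (fst (rz ?n1 (p @ [2]) env Y))" by auto
  then show ?case
  proof
    assume "y \<in> fv (fst (rz n (p @ [1]) env X))"
    from NA.IH(1)[OF ENV_app[OF NA.prems(1)] _ this] NA.prems(2) show ?thesis by auto
  next
    assume "y \<in> fv (fst (rz ?n1 (p @ [2]) env Y))"
    from NA.IH(2)[OF ENV_app[OF NA.prems(1)] _ this] NA.prems(2) n1 show ?thesis by auto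
  qed
qed

lemma rz_fv_env:
  "ENV p env \<Longrightarrow> lo X \<subseteq> {..<length env} \<Longrightarrow> i \<in> lo X \<Longrightarrow> env ! i \<in> fv (fst (rz n p env X))"
proof (induction X arbitrary: n p env i)
  case (NL s X)
  obtain j where j: "j \<in> lo X" "j \<noteq> 0" "i = j - 1" using NL.prems(3) by auto
  then have "Suc i \<in> lo X" by simp
  then have "(Inr (p, s) # env) ! Suc i \<in> fv (fst (rz n (p @ [1]) (Inr (p, s) # env) X))"
    using NL.IH[OF ENV_cons[OF NL.prems(1)] lo_NL_bound[OF NL.prems(2)]] by blast
  moreover have "env ! i \<noteq> Inr (p, s)"
  proof -
    have "i < length env" using NL.prems by auto
    then have "env ! i \<in> set env" by simp
    then show ?thesis using ENV_len[OF NL.prems(1)] by fastforce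
  qed
  ultimately show ?case by simp
next
  case (NA X Y)
  then show ?case using ENV_app[OF NA.prems(1)] by auto
qed auto

lemma rz_fv_Inl: "0 < nfc X \<Longrightarrow> \<exists>k t. Inl (k, t) \<in> fv (fst (rz n p env X)) \<and> n \<le> k"
proof (induction X arbitrary: n p env)
  case (NA X Y)
  show ?case
  proof (cases "0 < nfc X")
    case True
    then show ?thesis using NA.IH(1)[of n "p @ [1]" env] by auto
  next
    case False
    then have "0 < nfc Y" using NA.prems by simp
    then obtain k t where "Inl (k, t) \<in> fv (fst (rz (snd (rz n (p @ [1]) env X)) (p @ [2]) env Y))"
      "snd (rz n (p @ [1]) env X) \<le> k" using NA.IH(2) by blast
    then show ?thesis using rz_cnt[of n "p @ [1]" env X] by (intro exI[of _ k] exI[of _ t]) auto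
  qed
qed auto

lemma rz_binders:
  "(\<forall>u\<in>set (binders (fst (rz n p env X))). \<exists>q s. u = Inr (q, s) \<and> prefix p q) \<and>
   distinct (binders (fst (rz n p env X)))"
proof (induction X arbitrary: n p env)
  case (NL s X)
  have a: "\<forall>u\<in>set (binders (fst (rz n (p @ [1]) (Inr (p, s) # env) X))). \<exists>q s. u = Inr (q, s) \<and> prefix (p @ [1]) q"
    using NL.IH by blast
  then have "Inr (p, s) \<notin> set (binders (fst (rz n (p @ [1]) (Inr (p, s) # env) X)))"
    by (fastforce simp: prefix_def)
  then show ?case using NL.IH[of n "p @ [1]" "Inr (p, s) # env"] a
    by (fastforce simp: prefix_def)
next
  case (NA X Y)
  let ?T1 = "fst (rz n (p @ [1]) env X)"
  let ?T2 = "fst (rz (snd (rz n (p @ [1]) env X)) (p @ [2]) env Y)"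
  have a1: "\<forall>u\<in>set (binders ?T1). \<exists>q s. u = Inr (q, s) \<and> prefix (p @ [1]) q" "distinct (binders ?T1)"
    using NA.IH(1) by blast+
  have a2: "\<forall>u\<in>set (binders ?T2). \<exists>q s. u = Inr (q, s) \<and> prefix (p @ [2]) q" "distinct (binders ?T2)"
    using NA.IH(2) by blast+
  have "set (binders ?T1) \<inter> set (binders ?T2) = {}"
  proof (rule ccontr)
    assume "set (binders ?T1) \<inter> set (binders ?T2) \<noteq> {}"
    then obtain u where "u \<in> set (binders ?T1)" "u \<in> set (binders ?T2)" by blast
    then obtain q s where "prefix (p @ [1]) q" "prefix (p @ [2]) q" using a1 a2 by fastforce
    then show False by (auto simp: prefix_def)
  qed
  then show ?case using a1 a2 by (fastforce simp: prefix_def)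
qed auto



fun hrmR :: "('v \<Rightarrow> 'v \<Rightarrow> bool) \<Rightarrow> 'v trm \<Rightarrow> bool" where
  "hrmR R (Var x) = True"
| "hrmR R (Lam x M) \<longleftrightarrow> hrmR R M \<and> x \<in> fv M \<and> (\<forall>y\<in>fv M. R y x)"
| "hrmR R (App M N) \<longleftrightarrow> hrmR R M \<and> hrmR R N \<and> (\<forall>y\<in>fv M. \<exists>z\<in>fv N. R y z)"

fun rk :: "nat \<Rightarrow> 'a wv \<Rightarrow> nat" where
  "rk K (Inl (k, t)) = k"
| "rk K (Inr (q, s)) = K + length q"

definition rel :: "nat \<Rightarrow> 'a wv \<Rightarrow> 'a wv \<Rightarrow> bool" where
  "rel K u w \<longleftrightarrow> u = w \<or> rk K u < rk K w"

lemma rz_hrm: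
  "ENV p env \<Longrightarrow> lo X \<subseteq> {..<length env} \<Longrightarrow> nsh X \<Longrightarrow> n + nfc X \<le> K \<Longrightarrow>
   hrmR (rel K) (fst (rz n p env X))"
proof (induction X arbitrary: n p env)
  case (NF t)
  then show ?case by simp
next
  case (NB i)
  then show ?case by simp
next
  case (NL s X)
  let ?e = "Inr (p, s) # env"
  let ?T = "fst (rz n (p @ [1]) ?e X)"
  have E: "ENV (p @ [1]) ?e" using ENV_cons[OF NL.prems(1)] .
  have L: "lo X \<subseteq> {..<length ?e}" using lo_NL_bound[OF NL.prems(2)] .
  have sh: "nsh X" "0 \<in> lo X" using NL.prems(3) by auto
  have ih: "hrmR (rel K) ?T" using NL.IH[OF E L sh(1)] NL.prems(4) by simp
  have mem: "Inr (p, s) \<in> fv ?T" using rz_fv_env[OF E L sh(2)] by simp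
  have all: "\<forall>y\<in>fv ?T. rel K y (Inr (p, s))"
  proof
    fix y assume y: "y \<in> fv ?T"
    from rz_fv[OF E L y] show "rel K y (Inr (p, s))"
    proof
      assume "\<exists>k t. y = Inl (k, t) \<and> n \<le> k \<and> k < n + nfc X"
      then show ?thesis using NL.prems(4) unfolding rel_def by auto
    next
      assume "\<exists>i\<in>lo X. y = ?e ! i"
      then obtain i where i: "i \<in> lo X" "y = ?e ! i" by auto
      show ?thesis
      proof (cases i)
        case 0 then show ?thesis using i unfolding rel_def by simp
      next
        case (Suc j)
        then have "j < length env" using i L by auto
        then have "env ! j \<in> set env" by simp
        then obtain q s' where "env ! j = Inr (q, s')" "length q < length p"
          using ENV_len[OF NL.prems(1)] by blast
        then show ?thesis using i Suc unfolding rel_def by simp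
      qed
    qed
  qed
  show ?case using ih mem all by simp
next
  case (NA X Y)
  let ?n1 = "snd (rz n (p @ [1]) env X)"
  let ?T1 = "fst (rz n (p @ [1]) env X)"
  let ?T2 = "fst (rz ?n1 (p @ [2]) env Y)"
  have n1: "?n1 = n + nfc X" using rz_cnt .
  have E1: "ENV (p @ [1]) env" and E2: "ENV (p @ [2]) env" using ENV_app[OF NA.prems(1)] by auto
  have L1: "lo X \<subseteq> {..<length env}" and L2: "lo Y \<subseteq> {..<length env}" using NA.prems(2) by auto
  have sh: "nsh X" "nsh Y" "\<forall>i\<in>lo X. \<exists>j\<in>lo Y. j \<le> i" "hv X \<longrightarrow> hv Y" using NA.prems(3) by auto
  have ih1: "hrmR (rel K) ?T1" using NA.IH(1)[OF E1 L1 sh(1)] NA.prems(4) by simp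
  have ih2: "hrmR (rel K) ?T2" using NA.IH(2)[OF E2 L2 sh(2)] NA.prems(4) n1 by simp
  have c: "\<forall>y\<in>fv ?T1. \<exists>z\<in>fv ?T2. rel K y z"
  proof
    fix y assume y: "y \<in> fv ?T1"
    from rz_fv[OF E1 L1 y] show "\<exists>z\<in>fv ?T2. rel K y z"
    proof
      assume "\<exists>k t. y = Inl (k, t) \<and> n \<le> k \<and> k < n + nfc X"
      then obtain k t where kt: "y = Inl (k, t)" "k < n + nfc X" "n \<le> k" by auto
      then have "hv X" unfolding hv_def by auto
      then have "hv Y" using sh(4) by simp
      then show ?thesis unfolding hv_def
      proof
        assume "0 < nfc Y"
        then obtain k' t' where "Inl (k', t') \<in> fv ?T2" "?n1 \<le> k'" using rz_fv_Inl by blast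
        then show ?thesis using kt n1 unfolding rel_def by (intro bexI[of _ "Inl (k', t')"]) auto
      next
        assume "lo Y \<noteq> {}"
        then obtain j where j: "j \<in> lo Y" by auto
        then have z: "env ! j \<in> fv ?T2" using rz_fv_env[OF E2 L2] by blast
        have "j < length env" using j L2 by auto
        then obtain q s where "env ! j = Inr (q, s)" using ENV_len[OF NA.prems(1)] nth_mem by blast
        then show ?thesis using z kt NA.prems(4) unfolding rel_def by (intro bexI[of _ "env ! j"]) auto
      qed
    next
      assume "\<exists>i\<in>lo X. y = env ! i"
      then obtain i where i: "i \<in> lo X" "y = env ! i" by auto
      then obtain j where j: "j \<in> lo Y" "j \<le> i" using sh(3) by auto
      have z: "env ! j \<in> fv ?T2" using rz_fv_env[OF E2 L2 j(1)] .
      have il: "i < length env" using i L1 by auto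
      have "rel K (env ! i) (env ! j)"
      proof (cases "j = i")
        case True then show ?thesis unfolding rel_def by simp
      next
        case False
        then have "j < i" using j by simp
        then have "alen (env ! i) < alen (env ! j)"
          using NA.prems(1) il unfolding ENV_def by (simp add: sorted_wrt_iff_nth_less)
        moreover obtain q s where "env ! i = Inr (q, s)" using ENV_len[OF NA.prems(1)] nth_mem il by blast
        moreover obtain q' s' where "env ! j = Inr (q', s')" using ENV_len[OF NA.prems(1)] nth_mem il \<open>j < i\<close>
          by (metis order.strict_trans)
        ultimately show ?thesis unfolding rel_def by simp
      qed
      then show ?thesis using z i by blast
    qed
  qed
  show ?case using ih1 ih2 c by simp
qed

fun tmap :: "('u \<Rightarrow> 'v) \<Rightarrow> 'u trm \<Rightarrow> 'v trm" where
  "tmap f (Var x) = Var (f x)"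
| "tmap f (Lam x M) = Lam (f x) (tmap f M)"
| "tmap f (App M N) = App (tmap f M) (tmap f N)"

definition allv :: "'u trm \<Rightarrow> 'u set" where
  "allv T = fv T \<union> set (binders T)"

lemma allv_Lam: "allv T \<union> {x} \<subseteq> allv (Lam x T)"
  unfolding allv_def by auto

lemma allv_App: "allv T1 \<subseteq> allv (App T1 T2)" "allv T2 \<subseteq> allv (App T1 T2)"
  unfolding allv_def by auto

lemma tmap_binders: "binders (tmap f T) = map f (binders T)"
  by (induction T) auto

lemma tmap_fv: "inj_on f (allv T) \<Longrightarrow> fv (tmap f T) = f ` fv T"
proof (induction T)
  case (Var x)
  then show ?case by simp
next
  case (Lam x T)
  have inj: "inj_on f (allv T \<union> {x})" using inj_on_subset[OF Lam.prems allv_Lam] .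
  then have ih: "fv (tmap f T) = f ` fv T" using Lam.IH inj_on_subset by blast
  have "f ` (fv T - {x}) = f ` fv T - f ` {x}"
    by (rule inj_on_image_set_diff[OF inj]) (auto simp: allv_def)
  then show ?case using ih by simp
next
  case (App T1 T2)
  then show ?case using inj_on_subset[OF App.prems allv_App(1)] inj_on_subset[OF App.prems allv_App(2)]
    by auto
qed

lemma fv_finite: "finite (fv T)"
  by (induction T) auto

lemma tmap_hrm:
  "inj_on f (allv T) \<Longrightarrow> hrmR R T \<Longrightarrow> (\<forall>u\<in>allv T. \<forall>w\<in>allv T. R u w \<longrightarrow> ord (f u) \<le> ord (f w)) \<Longrightarrow>
   hrm ord (tmap f T)"
proof (induction T)
  case (Var x)
  then show ?case by simp
next
  case (Lam x T)
  have sub: "allv T \<subseteq> allv (Lam x T)" "x \<in> allv (Lam x T)" unfolding allv_def by auto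
  have inj: "inj_on f (allv T)" using inj_on_subset[OF Lam.prems(1) sub(1)] .
  have ih: "hrm ord (tmap f T)" using Lam.IH[OF inj] Lam.prems sub by auto
  have fvT: "fv (tmap f T) = f ` fv T" using tmap_fv[OF inj] .
  have "fv T \<subseteq> allv T" unfolding allv_def by auto
  then show ?case using ih fvT Lam.prems sub by auto
next
  case (App T1 T2)
  have inj1: "inj_on f (allv T1)" and inj2: "inj_on f (allv T2)"
    using inj_on_subset[OF App.prems(1) allv_App(1)] inj_on_subset[OF App.prems(1) allv_App(2)] .
  have s1: "allv T1 \<subseteq> allv (App T1 T2)" and s2: "allv T2 \<subseteq> allv (App T1 T2)" by (rule allv_App)+
  have "\<forall>u\<in>allv T1. \<forall>w\<in>allv T1. R u w \<longrightarrow> ord (f u) \<le> ord (f w)" using App.prems(3) s1 by blast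
  then have ih1: "hrm ord (tmap f T1)" using App.IH(1)[OF inj1] App.prems(2) by simp
  have "\<forall>u\<in>allv T2. \<forall>w\<in>allv T2. R u w \<longrightarrow> ord (f u) \<le> ord (f w)" using App.prems(3) s2 by blast
  then have ih2: "hrm ord (tmap f T2)" using App.IH(2)[OF inj2] App.prems(2) by simp
  have f1: "fv T1 \<subseteq> allv (App T1 T2)" and f2: "fv T2 \<subseteq> allv (App T1 T2)" unfolding allv_def by auto
  have "\<forall>y\<in>fv T1. \<exists>z\<in>fv T2. ord (f y) \<le> ord (f z)"
    using App.prems(2,3) f1 f2 by fastforce
  then show ?case using ih1 ih2 tmap_fv[OF inj1] tmap_fv[OF inj2] by auto
qed

lemma idx_map: "inj_on f (set env \<union> {x}) \<Longrightarrow> idx (map f env) (f x) = idx env x"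
proof (induction env)
  case (Cons y ys)
  have "inj_on f (set ys \<union> {x})" using Cons.prems by (rule inj_on_subset) auto
  moreover have "(f x = f y) = (x = y)" using Cons.prems by (auto dest: inj_onD)
  ultimately show ?case using Cons.IH by simp
qed simp

lemma tmap_nl:
  "inj_on f (allv T \<union> set env) \<Longrightarrow> (\<forall>w\<in>allv T \<union> set env. \<Omega> (f w) = OW' w) \<Longrightarrow>
   nl \<Omega> (map f env) (tmap f T) = nl OW' env T"
proof (induction T arbitrary: env)
  case (Var x)
  have x: "x \<in> allv (Var x)" unfolding allv_def by simp
  have mem: "(f x \<in> set (map f env)) = (x \<in> set env)"
    using Var.prems(1) x by (auto dest: inj_onD)
  have "set env \<union> {x} \<subseteq> allv (Var x) \<union> set env" using x by auto
  then have "inj_on f (set env \<union> {x})" using inj_on_subset[OF Var.prems(1)] by blast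
  then have id: "idx (map f env) (f x) = idx env x" by (rule idx_map)
  have om: "\<Omega> (f x) = OW' x" using Var.prems(2) x by blast
  show ?case using mem id om by simp
next
  case (Lam x T)
  have s: "allv T \<union> set (x # env) \<subseteq> allv (Lam x T) \<union> set env" unfolding allv_def by auto
  have "nl \<Omega> (map f (x # env)) (tmap f T) = nl OW' (x # env) T"
    using Lam.IH[OF inj_on_subset[OF Lam.prems(1) s]] Lam.prems(2) s by blast
  moreover have "\<Omega> (f x) = OW' x" using Lam.prems(2) unfolding allv_def by auto
  ultimately show ?case by simp
next
  case (App T1 T2)
  have s1: "allv T1 \<union> set env \<subseteq> allv (App T1 T2) \<union> set env"
   and s2: "allv T2 \<union> set env \<subseteq> allv (App T1 T2) \<union> set env" unfolding allv_def by auto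
  show ?case using App.IH(1)[OF inj_on_subset[OF App.prems(1) s1]] App.IH(2)[OF inj_on_subset[OF App.prems(1) s2]]
    App.prems(2) s1 s2 by auto
qed

lemma choose_vars:
  fixes \<Omega> :: "'v \<Rightarrow> 'a form" and OW' :: "'w \<Rightarrow> 'a form" and r :: "'w \<Rightarrow> nat" and ord :: "'v \<Rightarrow> nat"
  assumes "inj ord" "\<forall>\<psi>. infinite (\<Omega> -` {\<psi>})" "finite V"
  shows "\<exists>f. inj_on f V \<and> (\<forall>w\<in>V. \<Omega> (f w) = OW' w) \<and> (\<forall>u\<in>V. \<forall>w\<in>V. r u < r w \<longrightarrow> ord (f u) < ord (f w))"
  using assms(3)
proof (induct V rule: finite_ranking_induct[where f = r])
  case empty
  then show ?case by simp
next
  case (insert x S)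
  obtain f where fall: "inj_on f S \<and> (\<forall>w\<in>S. \<Omega> (f w) = OW' w) \<and> (\<forall>u\<in>S. \<forall>w\<in>S. r u < r w \<longrightarrow> ord (f u) < ord (f w))"
    using insert.hyps(3) by (rule exE)
  have f: "inj_on f S" "\<forall>w\<in>S. \<Omega> (f w) = OW' w" "\<forall>u\<in>S. \<forall>w\<in>S. r u < r w \<longrightarrow> ord (f u) < ord (f w)"
    using fall by blast+
  show ?case
  proof (cases "x \<in> S")
    case True
    then show ?thesis using f by (auto simp: insert_absorb)
  next
    case False
    define m where "m = Max (insert 0 (ord ` f ` S))"
    have fin: "finite (ord -` {..m})" using finite_vimageI[OF finite_atMost assms(1)] .
    have "infinite (\<Omega> -` {OW' x} - ord -` {..m})"
      using Diff_infinite_finite[OF fin spec[OF assms(2), of "OW' x"]] .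
    then have "\<Omega> -` {OW' x} - ord -` {..m} \<noteq> {}" using infinite_imp_nonempty by blast
    then obtain v where v0: "v \<in> \<Omega> -` {OW' x}" "v \<notin> ord -` {..m}" by blast
    have v: "\<Omega> v = OW' x" "m < ord v" using v0 by auto
    have ym: "\<forall>y\<in>S. ord (f y) < ord v"
    proof
      fix y assume "y \<in> S"
      then have "ord (f y) \<le> m" unfolding m_def using insert.hyps(1) by (intro Max_ge) auto
      then show "ord (f y) < ord v" using v by simp
    qed
    let ?g = "f(x := v)"
    have "inj_on ?g (insert x S)" unfolding inj_on_def
    proof (intro ballI impI)
      fix a b assume a: "a \<in> insert x S" and b: "b \<in> insert x S" and e: "?g a = ?g b"
      show "a = b"
      proof (cases "a = x")
        case True
        show ?thesis
        proof (rule ccontr)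
          assume "a \<noteq> b"
          then have "b \<in> S" "b \<noteq> x" using b True by auto
          then have "?g b = f b" by simp
          moreover have "?g a = v" using True by simp
          ultimately have "f b = v" using e by simp
          then show False using ym \<open>b \<in> S\<close> by force
        qed
      next
        case False
        then have aS: "a \<in> S" using a by simp
        show ?thesis
        proof (cases "b = x")
          case True
          then have "f a = v" using e False by simp
          then show ?thesis using ym aS by force
        next
          case False2: False
          then have "b \<in> S" using b by simp
          then show ?thesis using e False False2 aS f(1) by (simp add: inj_on_def)
        qed
      qed
    qed
    moreover have "\<forall>w\<in>insert x S. \<Omega> (?g w) = OW' w" using f(2) v False by auto
    moreover have "\<forall>u\<in>insert x S. \<forall>w\<in>insert x S. r u < r w \<longrightarrow> ord (?g u) < ord (?g w)"
    proof (intro ballI impI)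
      fix u w assume u: "u \<in> insert x S" and w: "w \<in> insert x S" and lt: "r u < r w"
      show "ord (?g u) < ord (?g w)"
      proof (cases "w = x")
        case True
        then have "u \<noteq> x" using lt by auto
        then have "u \<in> S" using u by simp
        then show ?thesis using ym True \<open>u \<noteq> x\<close> by simp
      next
        case False
        then have wS: "w \<in> S" using w by simp
        show ?thesis
        proof (cases "u = x")
          case True
          have "r w \<le> r x" using insert.hyps(2) wS by simp
          then show ?thesis using lt True by simp
        next
          case False2: False
          then have "u \<in> S" using u by simp
          then show ?thesis using f(3) wS lt False False2 by simp
        qed
      qed
    qed
    ultimately show ?thesis by blast
  qed
qed



lemma realize:
  fixes ord :: "'v \<Rightarrow> nat" and \<Omega> :: "'v \<Rightarrow> 'a form"
  assumes ord: "inj ord" and inf: "\<forall>\<psi>. infinite (\<Omega> -` {\<psi>})" and g: "good X"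
  shows "\<exists>M'. M' \<in> LNF ord \<Omega> \<and> nl \<Omega> [] M' = X"
proof -
  have tX: "nty [] X \<noteq> None" and shX: "nsh X" and nX: "nnorm X" using g unfolding good_def by auto
  have lo0: "lo X = {}" using nty_lo[OF tX] by fastforce
  have E: "ENV [] ([] :: 'a wv list)" by (simp add: ENV_def)
  have L: "lo X \<subseteq> {..<length ([] :: 'a wv list)}" using lo0 by simp
  define T where "T = fst (rz 0 [] ([] :: 'a wv list) X)"
  have nlT: "nl OW [] T = X" unfolding T_def using rz_nl[OF E L] .
  have hT: "hrmR (rel (nfc X)) T" unfolding T_def using rz_hrm[OF E L shX] by simp
  have bT: "\<forall>u\<in>set (binders T). \<exists>q s. u = Inr (q, s)" "distinct (binders T)"
    unfolding T_def using rz_binders by blast+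
  have fT: "\<forall>y\<in>fv T. \<exists>k t. y = Inl (k, t)"
  proof
    fix y assume "y \<in> fv T"
    from rz_fv[OF E L this[unfolded T_def]] lo0 show "\<exists>k t. y = Inl (k, t)" by auto
  qed
  have disj: "set (binders T) \<inter> fv T = {}" using bT(1) fT by fastforce
  have finV: "finite (allv T)" unfolding allv_def using fv_finite by auto
  obtain f :: "'a wv \<Rightarrow> 'v" where f: "inj_on f (allv T)" "\<forall>w\<in>allv T. \<Omega> (f w) = OW w"
    "\<forall>u\<in>allv T. \<forall>w\<in>allv T. rk (nfc X) u < rk (nfc X) w \<longrightarrow> ord (f u) < ord (f w)"
    using choose_vars[OF ord inf finV, of OW "rk (nfc X)"] by blast
  define M' where "M' = tmap f T"
  have nlM: "nl \<Omega> [] M' = X"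
    using tmap_nl[of f T "[]" \<Omega> OW] f(1,2) nlT unfolding M'_def by simp
  have wf: "wf_trm M'"
  proof -
    have "distinct (binders M')" unfolding M'_def tmap_binders
      using bT(2) f(1) by (simp add: distinct_map allv_def inj_on_subset)
    moreover have "set (binders M') \<inter> fv M' = {}"
    proof -
      have "fv M' = f ` fv T" unfolding M'_def using tmap_fv[OF f(1)] .
      moreover have "set (binders M') = f ` set (binders T)" unfolding M'_def tmap_binders by simp
      moreover have "f ` set (binders T) \<inter> f ` fv T = f ` (set (binders T) \<inter> fv T)"
        using f(1) by (intro inj_on_image_Int[symmetric]) (auto simp: allv_def)
      ultimately show ?thesis using disj by simp
    qed
    ultimately show ?thesis unfolding wf_trm_def by simp
  qed
  have ty: "ty \<Omega> M' = nty [] X" using nl_nty[of \<Omega> "[]" M'] nlM by simp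
  have hrmM: "hrm ord M'" unfolding M'_def
  proof (rule tmap_hrm[OF f(1) hT])
    show "\<forall>u\<in>allv T. \<forall>w\<in>allv T. rel (nfc X) u w \<longrightarrow> ord (f u) \<le> ord (f w)"
      using f(3) unfolding rel_def by fastforce
  qed
  have bn: "beta_normal M'" using nl_norm[of \<Omega> "[]" M'] nlM nX by simp
  have "M' \<in> LNF ord \<Omega>" unfolding LNF_iff using wf ty tX hrmM bn by simp
  then show ?thesis using nlM by blast
qed

theorem lemma3p7:
  fixes ord :: "'v \<Rightarrow> nat" and \<Omega> :: "'v \<Rightarrow> 'a form"
    and M :: "'v trm" and \<phi> :: "'a form" and \<alpha> :: "'a sym ptree"
  assumes "inj ord"
    and "\<forall>\<psi>. infinite (\<Omega> -` {\<psi>})"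
    and "M \<in> LNF ord \<Omega>"
    and "has_type ord \<Omega> M \<phi>"
    and "blueprint \<alpha>"
    and "vcomp \<alpha> (blueprint_of ord \<Omega> M)"
  shows "\<exists>M'. M' \<in> LNF ord \<Omega> \<and> same_kind ord \<Omega> M' M \<and>
              blueprint_of ord \<Omega> M' = \<alpha> \<and> card (tdom M') \<le> card (tdom M)"
proof -
  define X where "X = nl \<Omega> [] M"
  have gX: "good X" unfolding X_def using good_nl[OF assms(3,1)] .
  have bpM: "blueprint_of ord \<Omega> M = nbp X" unfolding X_def using bp_bridge[OF assms(3)] .
  obtain Y where Y: "good Y" "nbp Y = \<alpha>" "nk Y = nk X" "nty [] Y = nty [] X" "nsize Y \<le> nsize X"
    using vc[OF assms(6) bpM gX] by blast
  obtain M' where M': "M' \<in> LNF ord \<Omega>" "nl \<Omega> [] M' = Y" using realize[OF assms(1,2) Y(1)] by blast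
  have bp': "blueprint_of ord \<Omega> M' = \<alpha>" using bp_bridge[OF M'(1)] M'(2) Y(2) by simp
  have card: "card (tdom M') \<le> card (tdom M)"
    using card_tdom[of M' \<Omega> "[]"] card_tdom[of M \<Omega> "[]"] M'(2) Y(5) unfolding X_def by simp
  have kind: "kind M' = kind M"
    using nl_nk[of \<Omega> "[]" M'] nl_nk[of \<Omega> "[]" M] M'(2) Y(3) unfolding X_def by simp
  have tyM: "ty \<Omega> M = Some \<phi>" using assms(4) has_type_iff by blast
  have tM: "type_of ord \<Omega> M = \<phi>" using type_of_eq[OF assms(4)] .
  have tyX: "nty [] X = Some \<phi>" using nl_nty[of \<Omega> "[]" M] tyM unfolding X_def by simp
  have tyM': "ty \<Omega> M' = Some \<phi>" using nl_nty[of \<Omega> "[]" M'] M'(2) Y(4) tyX by simp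
  have "hrm ord M'" using M'(1) unfolding LNF_iff by simp
  then have "has_type ord \<Omega> M' \<phi>" using tyM' has_type_iff by blast
  then have "type_of ord \<Omega> M' = \<phi>" by (rule type_of_eq)
  then have "same_kind ord \<Omega> M' M" unfolding same_kind_def using kind tM by simp
  then show ?thesis using M'(1) bp' card by blast
qed


end
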